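(* Let $n\ge 3$ (even or odd), $k\ge 3$ and $m\ge 2$ be integers. Then the strong metric dimension of $(C_n\square P_k)\square P_m$ is $2n$.
   Context: All graphs are finite and connected; $d(u,v)$ is the shortest-path distance. $C_n$ is the cycle on $n$ vertices and $P_k$ the path on $k$ vertices. The cartesian product $G\square H$ has vertex set $V(G)\times V(H)$, with $(g_1,h_1)$ adjacent to $(g_2,h_2)$ iff either $h_1=h_2$ and $g_1g_2\in E(G)$, or $g_1=g_2$ and $h_1h_2\in E(H)$. A set $Q\subseteq V(G)$ is a strong resolving set of $G$ if for any two distinct vertices $p,q$ of $G$ there is $s\in Q$ such that $p$ lies on some shortest $q$–$s$ path or $q$ lies on some shortest $p$–$s$ path. The strong metric dimension $\mathrm{sdim}(G)$ is the minimum size of a strong resolving set of $G$. *)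

theory Defs
  imports Main
begin

type_synonym 'a graph = "'a set \<times> ('a \<Rightarrow> 'a \<Rightarrow> bool)"

definition verts :: "'a graph \<Rightarrow> 'a set" where "verts G = fst G"
definition adj :: "'a graph \<Rightarrow> 'a \<Rightarrow> 'a \<Rightarrow> bool" where "adj G = snd G"

definition cycle_graph :: "nat \<Rightarrow> nat graph" where
  "cycle_graph n = ({0..<n}, \<lambda>i j. i < n \<and> j < n \<and> i \<noteq> j \<and> (j = (i + 1) mod n \<or> i = (j + 1) mod n))"

definition path_graph :: "nat \<Rightarrow> nat graph" where
  "path_graph k = ({0..<k}, \<lambda>i j. i < k \<and> j < k \<and> (j = i + 1 \<or> i = j + 1))"

definition cart_prod :: "'a graph \<Rightarrow> 'b graph \<Rightarrow> ('a \<times> 'b) graph" where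
  "cart_prod G H = (verts G \<times> verts H,
     \<lambda>(g1, h1) (g2, h2). (h1 = h2 \<and> h1 \<in> verts H \<and> adj G g1 g2)
                      \<or> (g1 = g2 \<and> g1 \<in> verts G \<and> adj H h1 h2))"

definition walk :: "'a graph \<Rightarrow> 'a list \<Rightarrow> bool" where
  "walk G xs \<longleftrightarrow> xs \<noteq> [] \<and> set xs \<subseteq> verts G \<and>
     (\<forall>i. Suc i < length xs \<longrightarrow> adj G (xs ! i) (xs ! Suc i))"

definition walk_betw :: "'a graph \<Rightarrow> 'a \<Rightarrow> 'a list \<Rightarrow> 'a \<Rightarrow> bool" where
  "walk_betw G u xs v \<longleftrightarrow> walk G xs \<and> hd xs = u \<and> last xs = v"

definition dist :: "'a graph \<Rightarrow> 'a \<Rightarrow> 'a \<Rightarrow> nat" where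
  "dist G u v = (LEAST n. \<exists>xs. walk_betw G u xs v \<and> length xs = Suc n)"

definition shortest_path :: "'a graph \<Rightarrow> 'a \<Rightarrow> 'a list \<Rightarrow> 'a \<Rightarrow> bool" where
  "shortest_path G u xs v \<longleftrightarrow> walk_betw G u xs v \<and> length xs = Suc (dist G u v)"

definition on_shortest_path :: "'a graph \<Rightarrow> 'a \<Rightarrow> 'a \<Rightarrow> 'a \<Rightarrow> bool" where
  "on_shortest_path G u x v \<longleftrightarrow> (\<exists>xs. shortest_path G u xs v \<and> x \<in> set xs)"

definition strong_resolving_set :: "'a graph \<Rightarrow> 'a set \<Rightarrow> bool" where
  "strong_resolving_set G Q \<longleftrightarrow> Q \<subseteq> verts G \<and>
     (\<forall>p\<in>verts G. \<forall>q\<in>verts G. p \<noteq> q \<longrightarrow>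
        (\<exists>s\<in>Q. on_shortest_path G q p s \<or> on_shortest_path G p q s))"

definition sdim :: "'a graph \<Rightarrow> nat" where
  "sdim G = (LEAST c. \<exists>Q. strong_resolving_set G Q \<and> finite Q \<and> card Q = c)"

end

theory Submission
  imports Defs
begin


lemma walk_Cons:
  "walk G (x # xs) \<longleftrightarrow> x \<in> verts G \<and> (xs = [] \<or> (adj G x (hd xs) \<and> walk G xs))"
proof (cases xs)
  case Nil then show ?thesis by (auto simp: walk_def)
next
  case (Cons y ys)
  have "(\<forall>i. Suc i < length (x # y # ys) \<longrightarrow> adj G ((x # y # ys) ! i) ((x # y # ys) ! Suc i))
     \<longleftrightarrow> adj G x y \<and> (\<forall>i. Suc i < length (y # ys) \<longrightarrow> adj G ((y # ys) ! i) ((y # ys) ! Suc i))"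
    (is "?L \<longleftrightarrow> ?R")
  proof
    assume ?L
    show ?R
    proof
      show "adj G x y" using spec[OF \<open>?L\<close>, of 0] by simp
      show "\<forall>i. Suc i < length (y # ys) \<longrightarrow> adj G ((y # ys) ! i) ((y # ys) ! Suc i)"
        using \<open>?L\<close> by (metis Suc_less_eq length_Cons nth_Cons_Suc)
    qed
  next
    assume ?R
    show ?L
    proof (intro allI impI)
      fix i assume "Suc i < length (x # y # ys)"
      then show "adj G ((x # y # ys) ! i) ((x # y # ys) ! Suc i)"
        using \<open>?R\<close> by (cases i) auto
    qed
  qed
  then show ?thesis using Cons by (auto simp: walk_def)
qed

definition metric_ok :: "'a graph \<Rightarrow> ('a \<Rightarrow> 'a \<Rightarrow> nat) \<Rightarrow> bool" where
  "metric_ok G D \<longleftrightarrow> (\<forall>v\<in>verts G. D v v = 0 \<and>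
     (\<forall>x\<in>verts G. \<forall>y\<in>verts G. adj G x y \<longrightarrow> D x v \<le> D y v + 1) \<and>
     (\<forall>u\<in>verts G. D u v = 0 \<longrightarrow> u = v) \<and>
     (\<forall>u\<in>verts G. 0 < D u v \<longrightarrow> (\<exists>w\<in>verts G. adj G u w \<and> D w v + 1 = D u v)))"

lemma walk_lower:
  assumes M: "metric_ok G D" and v: "v \<in> verts G"
  shows "walk G xs \<Longrightarrow> last xs = v \<Longrightarrow> D (hd xs) v \<le> length xs - 1"
proof (induction xs)
  case Nil then show ?case by (simp add: walk_def)
next
  case (Cons x xs)
  show ?case
  proof (cases xs)
    case Nil then show ?thesis using Cons.prems M v by (simp add: metric_ok_def)
  next
    case (Cons y ys)
    have w: "walk G xs" "adj G x y" "x \<in> verts G" using Cons.prems(1) Cons by (auto simp: walk_Cons)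
    have yv: "y \<in> verts G" using w(1) Cons by (auto simp: walk_Cons)
    have "D y v \<le> length xs - 1" using Cons.IH w Cons.prems(2) Cons by auto
    moreover have "D x v \<le> D y v + 1" using M v w yv by (auto simp: metric_ok_def)
    ultimately show ?thesis using Cons by auto
  qed
qed

lemma walk_upper:
  assumes M: "metric_ok G D" and v: "v \<in> verts G"
  shows "u \<in> verts G \<Longrightarrow> \<exists>xs. walk_betw G u xs v \<and> length xs = Suc (D u v)"
proof (induction "D u v" arbitrary: u)
  case 0
  then have "u = v" using M v by (auto simp: metric_ok_def)
  then show ?case using 0 by (intro exI[of _ "[u]"]) (auto simp: walk_betw_def walk_def)
next
  case (Suc d)
  have "0 < D u v" using Suc.hyps(2) by simp
  then obtain w where w: "w \<in> verts G" "adj G u w" "D w v + 1 = D u v"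
    using M v Suc.prems unfolding metric_ok_def by blast
  then obtain xs where xs: "walk_betw G w xs v" "length xs = Suc (D w v)"
    using Suc by (metis add_right_cancel plus_1_eq_Suc add.commute)
  show ?case
    apply (rule exI[of _ "u # xs"])
    using xs w Suc.prems by (cases xs) (auto simp: walk_betw_def walk_Cons)
qed

lemma dist_eq:
  assumes M: "metric_ok G D" and u: "u \<in> verts G" and v: "v \<in> verts G"
  shows "dist G u v = D u v"
  unfolding dist_def
proof (rule Least_equality)
  show "\<exists>xs. walk_betw G u xs v \<and> length xs = Suc (D u v)" using walk_upper[OF M v u] .
next
  fix y assume "\<exists>xs. walk_betw G u xs v \<and> length xs = Suc y"
  then obtain xs where "walk_betw G u xs v" "length xs = Suc y" by blast
  then show "D u v \<le> y" using walk_lower[OF M v, of xs] by (auto simp: walk_betw_def)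
qed

lemma walk_append:
  assumes "walk G xs" "walk G ys" "last xs = hd ys"
  shows "walk G (xs @ tl ys)"
  using assms
proof (induction xs)
  case Nil then show ?case by (simp add: walk_def)
next
  case (Cons x xs)
  show ?case
  proof (cases xs)
    case Nil
    then show ?thesis using Cons.prems by (cases ys) auto
  next
    case (Cons y zs)
    then show ?thesis using Cons.prems Cons.IH by (auto simp: walk_Cons)
  qed
qed

lemma osp_intro:
  assumes M: "metric_ok G D" and "u \<in> verts G" "x \<in> verts G" "v \<in> verts G"
    and eq: "D u x + D x v = D u v"
  shows "on_shortest_path G u x v"
proof -
  obtain xs where xs: "walk_betw G u xs x" "length xs = Suc (D u x)"
    using walk_upper[OF M assms(3,2)] by blast
  obtain ys where ys: "walk_betw G x ys v" "length ys = Suc (D x v)"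
    using walk_upper[OF M assms(4,3)] by blast
  have "walk G (xs @ tl ys)" using xs ys walk_append[of G xs ys] by (auto simp: walk_betw_def)
  moreover have "hd (xs @ tl ys) = u" using xs by (cases xs) (auto simp: walk_betw_def)
  moreover have "last (xs @ tl ys) = v" using xs ys
    by (cases ys) (auto simp: walk_betw_def walk_def)
  moreover have "length (xs @ tl ys) = Suc (dist G u v)"
    using xs ys eq dist_eq[OF M assms(2,4)] by simp
  moreover have "x \<in> set (xs @ tl ys)" using xs
    by (metis Un_iff last_in_set set_append walk_betw_def walk_def)
  ultimately show ?thesis unfolding on_shortest_path_def shortest_path_def walk_betw_def by blast
qed

lemma walk_split:
  "walk G (ys @ x # zs) \<Longrightarrow> walk G (ys @ [x]) \<and> walk G (x # zs)"
proof (induction ys)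
  case Nil then show ?case by (auto simp: walk_Cons)
next
  case (Cons y ys)
  then show ?case by (cases ys) (auto simp: walk_Cons)
qed

lemma osp_le:
  assumes M: "metric_ok G D" and osp: "on_shortest_path G u x v"
  shows "x \<in> verts G \<and> D u x + D x v \<le> D u v"
proof -
  obtain xs where xs: "walk_betw G u xs v" "length xs = Suc (dist G u v)" "x \<in> set xs"
    using osp by (auto simp: on_shortest_path_def shortest_path_def)
  have uv: "u \<in> verts G" "v \<in> verts G" "x \<in> verts G" using xs
    by (auto simp: walk_betw_def walk_def)
  obtain ys zs where sp: "xs = ys @ x # zs" using xs(3) by (meson split_list)
  have w: "walk G xs" using xs by (simp add: walk_betw_def)
  have w1: "walk G (ys @ [x])" and w2: "walk G (x # zs)" using walk_split[of G ys x zs] w sp by auto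
  have h1: "hd (ys @ [x]) = u" using xs sp by (cases ys) (auto simp: walk_betw_def)
  have h2: "last (x # zs) = v" using xs sp by (auto simp: walk_betw_def)
  have "D u x \<le> length ys" using walk_lower[OF M uv(3) w1] h1 by simp
  moreover have "D x v \<le> length zs" using walk_lower[OF M uv(2) w2 h2] by simp
  ultimately show ?thesis using xs(2) sp dist_eq[OF M uv(1,2)] uv by simp
qed


definition ad :: "nat \<Rightarrow> nat \<Rightarrow> nat" where "ad x y = (if x \<le> y then y - x else x - y)"
definition dC :: "nat \<Rightarrow> nat \<Rightarrow> nat \<Rightarrow> nat" where "dC n x y = min (ad x y) (n - ad x y)"

lemma mod_suc: "i < n \<Longrightarrow> Suc i mod n = (if Suc i = n then 0 else Suc i)"
  by (cases "Suc i = n") auto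

lemma cyc_adj_iff:
  assumes "n \<ge> 3"
  shows "adj (cycle_graph n) i j \<longleftrightarrow> i < n \<and> j < n \<and>
     (j = i + 1 \<or> i = j + 1 \<or> (i = n - 1 \<and> j = 0) \<or> (j = n - 1 \<and> i = 0))"
  using assms by (auto simp: adj_def cycle_graph_def mod_suc split: if_splits)

lemma path_adj_iff: "adj (path_graph k) i j \<longleftrightarrow> i < k \<and> j < k \<and> (j = i + 1 \<or> i = j + 1)"
  by (auto simp: adj_def path_graph_def)

lemma verts_cyc: "verts (cycle_graph n) = {0..<n}" by (simp add: verts_def cycle_graph_def)
lemma verts_path: "verts (path_graph n) = {0..<n}" by (simp add: verts_def path_graph_def)

lemma verts_cp: "verts (cart_prod G H) = verts G \<times> verts H" by (simp add: verts_def cart_prod_def)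
lemma adj_cp: "adj (cart_prod G H) (g1, h1) (g2, h2) \<longleftrightarrow>
   (h1 = h2 \<and> h1 \<in> verts H \<and> adj G g1 g2) \<or> (g1 = g2 \<and> g1 \<in> verts G \<and> adj H h1 h2)"
  by (simp add: adj_def cart_prod_def)

lemma dC_lip:
  assumes "n \<ge> 3" "a < n" "a' < n" "w < n"
    "a' = a + 1 \<or> a = a' + 1 \<or> (a = n - 1 \<and> a' = 0) \<or> (a' = n - 1 \<and> a = 0)"
  shows "dC n a w \<le> dC n a' w + 1"
  using assms unfolding dC_def ad_def by (auto split: if_splits)

lemma ad_lip: "b' = b + 1 \<or> b = b' + 1 \<Longrightarrow> ad b w \<le> ad b' w + 1"
  unfolding ad_def by auto

lemma dC_desc:
  assumes "n \<ge> 3" "a < n" "w < n" "a \<noteq> w"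
  shows "\<exists>a'<n. (a' = a + 1 \<or> a = a' + 1 \<or> (a = n - 1 \<and> a' = 0) \<or> (a' = n - 1 \<and> a = 0))
            \<and> dC n a' w + 1 = dC n a w"
proof -
  let ?e = "ad a w"
  show ?thesis
  proof (cases "?e \<le> n - ?e")
    case True
    show ?thesis
    proof (cases "a < w")
      case True
      then show ?thesis using \<open>?e \<le> n - ?e\<close> assms
        by (intro exI[of _ "a + 1"]) (auto simp: dC_def ad_def)
    next
      case False
      then show ?thesis using \<open>?e \<le> n - ?e\<close> assms
        by (intro exI[of _ "a - 1"]) (auto simp: dC_def ad_def)
    qed
  next
    case False
    show ?thesis
    proof (cases "a < w")
      case True
      then show ?thesis using \<open>\<not> ?e \<le> n - ?e\<close> assms
        by (intro exI[of _ "if a = 0 then n - 1 else a - 1"]) (auto simp: dC_def ad_def)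
    next
      case False
      then show ?thesis using \<open>\<not> ?e \<le> n - ?e\<close> assms
        by (intro exI[of _ "if a + 1 = n then 0 else a + 1"]) (auto simp: dC_def ad_def)
    qed
  qed
qed



definition G3 :: "nat \<Rightarrow> nat \<Rightarrow> nat \<Rightarrow> ((nat \<times> nat) \<times> nat) graph" where
  "G3 n k m = cart_prod (cart_prod (cycle_graph n) (path_graph k)) (path_graph m)"

definition D3 :: "nat \<Rightarrow> (nat \<times> nat) \<times> nat \<Rightarrow> (nat \<times> nat) \<times> nat \<Rightarrow> nat" where
  "D3 n u v = dC n (fst (fst u)) (fst (fst v)) + ad (snd (fst u)) (snd (fst v)) + ad (snd u) (snd v)"

lemma verts_G3: "verts (G3 n k m) = ({0..<n} \<times> {0..<k}) \<times> {0..<m}"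
  by (simp add: G3_def verts_cp verts_cyc verts_path)

lemma adj_G3:
  assumes "n \<ge> 3"
  shows "adj (G3 n k m) ((a, b), c) ((a', b'), c') \<longleftrightarrow>
    (c = c' \<and> c < m \<and> ((b = b' \<and> b < k \<and> a < n \<and> a' < n \<and>
        (a' = a + 1 \<or> a = a' + 1 \<or> (a = n - 1 \<and> a' = 0) \<or> (a' = n - 1 \<and> a = 0)))
      \<or> (a = a' \<and> a < n \<and> b < k \<and> b' < k \<and> (b' = b + 1 \<or> b = b' + 1))))
    \<or> (a = a' \<and> b = b' \<and> a < n \<and> b < k \<and> c < m \<and> c' < m \<and> (c' = c + 1 \<or> c = c' + 1))"
  using assms by (auto simp: G3_def adj_cp verts_cp verts_cyc verts_path cyc_adj_iff path_adj_iff)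

lemma ad_desc: "b \<noteq> w \<Longrightarrow> b < k \<Longrightarrow> w < k \<Longrightarrow>
   \<exists>b'<k. (b' = b + 1 \<or> b = b' + 1) \<and> ad b' w + 1 = ad b w"
  by (cases "b < w") (auto simp: ad_def intro: exI[of _ "b + 1"] exI[of _ "b - 1"])

lemma metric_G3:
  assumes n: "n \<ge> 3"
  shows "metric_ok (G3 n k m) (D3 n)"
  unfolding metric_ok_def
proof (rule ballI, intro conjI)
  fix v assume v: "v \<in> verts (G3 n k m)"
  obtain av bv cv where vv: "v = ((av, bv), cv)" by (metis prod.exhaust)
  have vlt: "av < n" "bv < k" "cv < m" using v vv by (auto simp: verts_G3)
  show "D3 n v v = 0" by (simp add: D3_def dC_def ad_def)
  show "\<forall>x\<in>verts (G3 n k m). \<forall>y\<in>verts (G3 n k m). adj (G3 n k m) x y \<longrightarrow> D3 n x v \<le> D3 n y v + 1"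
  proof (intro ballI impI)
    fix x y assume x: "x \<in> verts (G3 n k m)" and y: "y \<in> verts (G3 n k m)" and xy: "adj (G3 n k m) x y"
    obtain a b c where xx: "x = ((a, b), c)" by (metis prod.exhaust)
    obtain a' b' c' where yy: "y = ((a', b'), c')" by (metis prod.exhaust)
    consider "c = c' \<and> b = b' \<and> a < n \<and> a' < n \<and>
        (a' = a + 1 \<or> a = a' + 1 \<or> (a = n - 1 \<and> a' = 0) \<or> (a' = n - 1 \<and> a = 0))"
      | "c = c' \<and> a = a' \<and> (b' = b + 1 \<or> b = b' + 1)"
      | "a = a' \<and> b = b' \<and> (c' = c + 1 \<or> c = c' + 1)"
      using xy unfolding xx yy adj_G3[OF n] by blast
    then show "D3 n x v \<le> D3 n y v + 1"
    proof cases
      case 1 note h = this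
      then have "dC n a av \<le> dC n a' av + 1" using dC_lip[OF n _ _ vlt(1)] by blast
      then show ?thesis using h by (simp add: xx yy vv D3_def)
    next
      case 2 note h = this
      then have "ad b bv \<le> ad b' bv + 1" using ad_lip by blast
      then show ?thesis using h by (simp add: xx yy vv D3_def)
    next
      case 3 note h = this
      then have "ad c cv \<le> ad c' cv + 1" using ad_lip by blast
      then show ?thesis using h by (simp add: xx yy vv D3_def)
    qed
  qed
  show "\<forall>u\<in>verts (G3 n k m). D3 n u v = 0 \<longrightarrow> u = v"
  proof (intro ballI impI)
    fix u assume u: "u \<in> verts (G3 n k m)" and z: "D3 n u v = 0"
    obtain a b c where uu: "u = ((a, b), c)" by (metis prod.exhaust)
    have "a < n" using u uu by (auto simp: verts_G3)
    then show "u = v" using z vlt unfolding uu vv D3_def dC_def ad_def by (auto split: if_splits)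
  qed
  show "\<forall>u\<in>verts (G3 n k m). 0 < D3 n u v \<longrightarrow> (\<exists>w\<in>verts (G3 n k m). adj (G3 n k m) u w \<and> D3 n w v + 1 = D3 n u v)"
  proof (intro ballI impI)
    fix u assume u: "u \<in> verts (G3 n k m)" and z: "0 < D3 n u v"
    obtain a b c where uu: "u = ((a, b), c)" by (metis prod.exhaust)
    have ult: "a < n" "b < k" "c < m" using u uu by (auto simp: verts_G3)
    have "u \<noteq> v" using z by (auto simp: D3_def dC_def ad_def)
    then consider "b \<noteq> bv" | "b = bv" "c \<noteq> cv" | "b = bv" "c = cv" "a \<noteq> av" using uu vv by auto
    then show "\<exists>w\<in>verts (G3 n k m). adj (G3 n k m) u w \<and> D3 n w v + 1 = D3 n u v"
    proof cases
      case 1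
      then obtain b' where b': "b' < k" "b' = b + 1 \<or> b = b' + 1" "ad b' bv + 1 = ad b bv"
        using ad_desc[OF _ ult(2) vlt(2)] by blast
      show ?thesis
        by (rule bexI[of _ "((a, b'), c)"]) (use b' ult in \<open>auto simp: uu vv D3_def adj_G3[OF n] verts_G3\<close>)
    next
      case 2
      then obtain c' where c': "c' < m" "c' = c + 1 \<or> c = c' + 1" "ad c' cv + 1 = ad c cv"
        using ad_desc[OF _ ult(3) vlt(3)] by blast
      show ?thesis
        by (rule bexI[of _ "((a, b), c')"]) (use c' ult in \<open>auto simp: uu vv D3_def adj_G3[OF n] verts_G3\<close>)
    next
      case 3
      then obtain a' where a': "a' < n" "(a' = a + 1 \<or> a = a' + 1 \<or> (a = n - 1 \<and> a' = 0) \<or> (a' = n - 1 \<and> a = 0))"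
            "dC n a' av + 1 = dC n a av"
        using dC_desc[OF n ult(1) vlt(1)] by blast
      have "adj (G3 n k m) u ((a', b), c)" using a' ult unfolding uu adj_G3[OF n] by blast
      moreover have "D3 n ((a', b), c) v + 1 = D3 n u v" using a' 3 by (simp add: uu vv D3_def)
      ultimately show ?thesis using a'(1) ult by (intro bexI[of _ "((a', b), c)"]) (auto simp: verts_G3)
    qed
  qed
qed



lemma n_half: "(n::nat) = 2 * (n div 2) \<or> n = 2 * (n div 2) + 1" by auto

lemma dC_le: "dC n x y \<le> n div 2"
  using n_half[of n] unfolding dC_def ad_def by (auto split: if_splits)

definition opp :: "nat \<Rightarrow> nat \<Rightarrow> nat" where
  "opp n a = (if a + n div 2 < n then a + n div 2 else a + n div 2 - n)"

lemma opp_lt: "a < n \<Longrightarrow> opp n a < n"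
  using n_half[of n] unfolding opp_def by auto

lemma dC_opp: "a < n \<Longrightarrow> dC n a (opp n a) = n div 2"
  using n_half[of n] unfolding dC_def ad_def opp_def by (auto split: if_splits)

lemma opp_inj: "a < n \<Longrightarrow> a' < n \<Longrightarrow> opp n a = opp n a' \<Longrightarrow> a = a'"
  using n_half[of n] unfolding opp_def by (auto split: if_splits)

lemma dC_between:
  assumes "n \<ge> 3" "a < n" "a' < n"
  shows "\<exists>s<n. dC n a a' + dC n a' s = dC n a s"
proof -
  define h where "h = n div 2"
  have hh: "n = 2 * h \<or> n = 2 * h + 1" using n_half[of n] h_def by auto
  define t where "t = (if a \<le> a' then a' - a else a' + n - a)"
  show ?thesis
  proof (cases "t \<le> h")
    case True
    show ?thesis
      apply (rule exI[of _ "if a + h < n then a + h else a + h - n"])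
      using True hh assms unfolding t_def dC_def ad_def by (auto split: if_splits)
  next
    case False
    show ?thesis
      apply (rule exI[of _ "if h \<le> a then a - h else a + n - h"])
      using False hh assms unfolding t_def dC_def ad_def by (auto split: if_splits)
  qed
qed



lemma ad_sym: "ad x y = ad y x" by (auto simp: ad_def)
lemma dC_sym: "dC n x y = dC n y x" by (simp add: dC_def ad_sym)
lemma D3_sym: "D3 n u v = D3 n v u" by (simp add: D3_def dC_sym ad_sym)

lemma D3_le:
  assumes "u \<in> verts (G3 n k m)" "v \<in> verts (G3 n k m)"
  shows "D3 n u v \<le> n div 2 + (k - 1) + (m - 1)"
proof -
  have "dC n (fst (fst u)) (fst (fst v)) \<le> n div 2" by (rule dC_le)
  moreover have "ad (snd (fst u)) (snd (fst v)) \<le> k - 1" "ad (snd u) (snd v) \<le> m - 1"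
    using assms by (auto simp: verts_G3 ad_def)
  ultimately show ?thesis by (simp add: D3_def)
qed

lemma diam_pair_hit:
  assumes n: "n \<ge> 3" and Q: "strong_resolving_set (G3 n k m) Q"
    and u: "u \<in> verts (G3 n k m)" and v: "v \<in> verts (G3 n k m)" and uv: "u \<noteq> v"
    and d: "D3 n u v = n div 2 + (k - 1) + (m - 1)"
  shows "u \<in> Q \<or> v \<in> Q"
proof -
  have M: "metric_ok (G3 n k m) (D3 n)" by (rule metric_G3[OF n])
  obtain s where s: "s \<in> Q" and o: "on_shortest_path (G3 n k m) v u s \<or> on_shortest_path (G3 n k m) u v s"
    using Q u v uv unfolding strong_resolving_set_def by blast
  have sv: "s \<in> verts (G3 n k m)" using Q s by (auto simp: strong_resolving_set_def)
  from o show ?thesis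
  proof
    assume h: "on_shortest_path (G3 n k m) v u s"
    have "D3 n v u + D3 n u s \<le> D3 n v s" using osp_le[OF M h] by simp
    moreover have "D3 n v s \<le> n div 2 + (k - 1) + (m - 1)" using D3_le[OF v sv] .
    ultimately have "D3 n s u = 0" using d D3_sym[of n u v] D3_sym[of n u s] by simp
    then have "s = u" using M u sv unfolding metric_ok_def by blast
    then show ?thesis using s by simp
  next
    assume h: "on_shortest_path (G3 n k m) u v s"
    have "D3 n u v + D3 n v s \<le> D3 n u s" using osp_le[OF M h] by simp
    moreover have "D3 n u s \<le> n div 2 + (k - 1) + (m - 1)" using D3_le[OF u sv] .
    ultimately have "D3 n s v = 0" using d D3_sym[of n v s] by simp
    then have "s = v" using M v sv unfolding metric_ok_def by blast
    then show ?thesis using s by simp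
  qed
qed

lemma lower:
  assumes n: "n \<ge> 3" and k: "k \<ge> 3" and m: "m \<ge> 2"
    and Q: "strong_resolving_set (G3 n k m) Q" and fin: "finite Q"
  shows "2 * n \<le> card Q"
proof -
  define I where "I = {0..<n} \<times> {0, m - 1}"
  define pu where "pu = (\<lambda>(a::nat, c::nat). ((a, 0::nat), c))"
  define pv where "pv = (\<lambda>(a, c). ((opp n a, k - 1), m - 1 - c))"
  have hit: "pu i \<in> Q \<or> pv i \<in> Q" if i: "i \<in> I" for i
  proof -
    obtain a c where ac: "i = (a, c)" by (metis prod.exhaust)
    have a: "a < n" and c: "c = 0 \<or> c = m - 1" using i ac by (auto simp: I_def)
    show ?thesis
    proof (rule diam_pair_hit[OF n Q])
      show "pu i \<in> verts (G3 n k m)" using a c k m by (auto simp: pu_def ac verts_G3)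
      show "pv i \<in> verts (G3 n k m)" using a c k m opp_lt[OF a] by (auto simp: pv_def ac verts_G3)
      show "pu i \<noteq> pv i" using k by (auto simp: pu_def pv_def ac)
      show "D3 n (pu i) (pv i) = n div 2 + (k - 1) + (m - 1)"
        using c m dC_opp[OF a] by (auto simp: pu_def pv_def ac D3_def ad_def)
    qed
  qed
  define f where "f = (\<lambda>i. SOME x. x \<in> Q \<and> (x = pu i \<or> x = pv i))"
  have f: "f i \<in> Q \<and> (f i = pu i \<or> f i = pv i)" if "i \<in> I" for i
    unfolding f_def by (rule someI_ex) (use hit[OF that] in blast)
  have inj: "inj_on f I"
  proof (rule inj_onI)
    fix i j assume i: "i \<in> I" and j: "j \<in> I" and e: "f i = f j"
    obtain a c where ac: "i = (a, c)" by (metis prod.exhaust)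
    obtain a' c' where ac': "j = (a', c')" by (metis prod.exhaust)
    have r: "a < n" "a' < n" "c = 0 \<or> c = m - 1" "c' = 0 \<or> c' = m - 1"
      using i j ac ac' by (auto simp: I_def)
    have "pu i = pu j \<or> pv i = pv j"
      using f[OF i] f[OF j] e k by (auto simp: pu_def pv_def ac ac')
    then show "i = j"
    proof
      assume "pu i = pu j" then show ?thesis by (simp add: pu_def ac ac')
    next
      assume "pv i = pv j"
      then have "opp n a = opp n a'" "m - 1 - c = m - 1 - c'" by (auto simp: pv_def ac ac')
      then have "a = a'" "c = c'" using opp_inj[OF r(1,2)] r(3,4) m by auto
      then show ?thesis by (simp add: ac ac')
    qed
  qed
  have "f ` I \<subseteq> Q" using f by auto
  then have "card I \<le> card Q" using card_inj_on_le[OF inj _ fin] by blast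
  moreover have "card I = 2 * n" using m by (simp add: I_def card_cartesian_product)
  ultimately show ?thesis by simp
qed

lemma resolve_one:
  assumes n: "n \<ge> 3" and m: "m \<ge> 2"
    and p: "p \<in> verts (G3 n k m)" and q: "q \<in> verts (G3 n k m)"
    and b: "snd (fst q) \<le> snd (fst p)"
  shows "\<exists>s\<in>(\<lambda>(a, c). ((a, 0), c)) ` ({0..<n} \<times> {0, m - 1}).
           on_shortest_path (G3 n k m) p q s"
proof -
  obtain a b c where pp: "p = ((a, b), c)" by (metis prod.exhaust)
  obtain a' b' c' where qq: "q = ((a', b'), c')" by (metis prod.exhaust)
  have r: "a < n" "a' < n" "b < k" "b' < k" "c < m" "c' < m" "b' \<le> b"
    using p q b pp qq by (auto simp: verts_G3)
  obtain sa where sa: "sa < n" "dC n a a' + dC n a' sa = dC n a sa"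
    using dC_between[OF n r(1,2)] by blast
  define sc where "sc = (if c' \<le> c then 0 else m - 1)"
  have scI: "sc \<in> {0, m - 1}" by (simp add: sc_def)
  have "on_shortest_path (G3 n k m) p q ((sa, 0), sc)"
  proof (rule osp_intro[OF metric_G3[OF n] p q])
    show "((sa, 0), sc) \<in> verts (G3 n k m)" using sa r m by (auto simp: verts_G3 sc_def)
    show "D3 n p q + D3 n q ((sa, 0), sc) = D3 n p ((sa, 0), sc)"
      using sa r m by (auto simp: D3_def pp qq sc_def ad_def)
  qed
  moreover have "((sa, 0), sc) \<in> (\<lambda>(a, c). ((a, 0), c)) ` ({0..<n} \<times> {0, m - 1})"
    using sa scI by (auto intro!: image_eqI[of _ _ "(sa, sc)"])
  ultimately show ?thesis by blast
qed

lemma upper: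
  assumes n: "n \<ge> 3" and m: "m \<ge> 2" and k: "k \<ge> 1"
  shows "strong_resolving_set (G3 n k m) ((\<lambda>(a, c). ((a, 0), c)) ` ({0..<n} \<times> {0, m - 1}))"
    and "card ((\<lambda>(a, c). ((a, 0::nat), c)) ` ({0..<n} \<times> {0, m - 1})) = 2 * n"
proof -
  show "strong_resolving_set (G3 n k m) ((\<lambda>(a, c). ((a, 0), c)) ` ({0..<n} \<times> {0, m - 1}))"
    unfolding strong_resolving_set_def
  proof (intro conjI ballI impI)
    show "(\<lambda>(a, c). ((a, 0), c)) ` ({0..<n} \<times> {0, m - 1}) \<subseteq> verts (G3 n k m)"
      using k m by (auto simp: verts_G3)
  next
    fix p q assume p: "p \<in> verts (G3 n k m)" and q: "q \<in> verts (G3 n k m)" and "p \<noteq> q"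
    show "\<exists>s\<in>(\<lambda>(a, c). ((a, 0), c)) ` ({0..<n} \<times> {0, m - 1}).
            on_shortest_path (G3 n k m) q p s \<or> on_shortest_path (G3 n k m) p q s"
    proof (cases "snd (fst q) \<le> snd (fst p)")
      case True then show ?thesis using resolve_one[OF n m p q] by blast
    next
      case False then show ?thesis using resolve_one[OF n m q p] by fastforce
    qed
  qed
  have "inj_on (\<lambda>(a, c). ((a, 0::nat), c)) ({0..<n} \<times> {0, m - 1})"
    by (auto simp: inj_on_def)
  then show "card ((\<lambda>(a, c). ((a, 0::nat), c)) ` ({0..<n} \<times> {0, m - 1})) = 2 * n"
    using m by (simp add: card_image card_cartesian_product)
qed

theorem theorem3p6:
  fixes n k m :: nat
  assumes "n \<ge> 3" and "k \<ge> 3" and "m \<ge> 2"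
  shows "sdim (cart_prod (cart_prod (cycle_graph n) (path_graph k)) (path_graph m)) = 2 * n"
proof -
  have G: "cart_prod (cart_prod (cycle_graph n) (path_graph k)) (path_graph m) = G3 n k m"
    by (simp add: G3_def)
  show ?thesis
    unfolding G sdim_def
  proof (rule Least_equality)
    show "\<exists>Q. strong_resolving_set (G3 n k m) Q \<and> finite Q \<and> card Q = 2 * n"
      using upper[OF assms(1,3)] assms(2)
      by (intro exI[of _ "(\<lambda>(a, c). ((a, 0::nat), c)) ` ({0..<n} \<times> {0, m - 1})"]) auto
  next
    fix y assume "\<exists>Q. strong_resolving_set (G3 n k m) Q \<and> finite Q \<and> card Q = y"
    then show "2 * n \<le> y" using lower[OF assms] by blast
  qed
qed


end
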